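(* For any integer $k\ge2$: (a) The set $\{a\in[\frac12,\frac23]:\varkappa_a\ge k\}$ is a finite union of closed non-degenerate intervals. On each of these intervals the functions $a\mapsto T_a^1(0),\dots,a\mapsto T_a^k(0)$ are strictly decreasing and continuous, and $a\mapsto\delta_1,\dots,a\mapsto\delta_{k-1}$ are constant. (b) The set $\{a\in[\frac12,\frac23]:\varkappa_a=k\}$ is the union of all (pairwise disjoint) open intervals $(a'',a')$ such that $T_{a''}^k(0)=1$ and $T_{a'}^k(0)=\frac{2a'-1}{1-a'}$.
   Context: For $a\in[\frac12,\frac23]$ let $I_a=\big(\frac{2a-1}{1-a},1\big)$ and define $T_a$ on $[0,\frac1{1-a}]\setminus I_a$ by $T_a(x)=\frac1a(x+1)$ for $0\le x\le\frac{2a-1}{1-a}$ and $T_a(x)=\frac1a(x-1)$ for $1\le x\le\frac1{1-a}$; for $a=\frac23$ set $T_{2/3}(1)=0$. Let $\varkappa_a=\inf\{k\ge0:T_a^k(0)\in I_a\}$ ($\inf\emptyset=\infty$) and, for $0\le k\le\varkappa_a$, $\delta_k=\delta_k(a)=\mathbb 1\{T_a^k(0)<1\}$. *)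

theory Defs
  imports "HOL-Analysis.Analysis" "HOL-Library.Extended_Nat"
begin

definition cI :: "real \<Rightarrow> real" where
  "cI a = (2*a - 1) / (1 - a)"

definition inI :: "real \<Rightarrow> real \<Rightarrow> bool" where
  "inI a x \<longleftrightarrow> cI a < x \<and> x < 1"

text \<open>On its domain [0,1/(1-a)] minus I_a this agrees with the paper:
  x \<le> (2a-1)/(1-a) < 1 (for a < 2/3) gives (x+1)/a, x \<ge> 1 gives (x-1)/a, and for a = 2/3
  the convention T(1) = 0 is the second branch. Outside the domain the value is irrelevant:
  only T_a^k(0) for k \<le> kappa_a is ever used.\<close>
definition T :: "real \<Rightarrow> real \<Rightarrow> real" where
  "T a x = (if x < 1 then (x + 1) / a else (x - 1) / a)"

definition orb :: "real \<Rightarrow> nat \<Rightarrow> real" where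
  "orb a k = (T a ^^ k) 0"

definition kappa :: "real \<Rightarrow> enat" where
  "kappa a = (if \<exists>k. inI a (orb a k) then enat (LEAST k. inI a (orb a k)) else \<infinity>)"

definition delta :: "real \<Rightarrow> nat \<Rightarrow> bool" where
  "delta a k \<longleftrightarrow> orb a k < 1"

end

theory Submission
  imports Defs
begin


abbreviation D :: "real set" where "D \<equiv> {1/2..2/3}"

fun F :: "bool list \<Rightarrow> real \<Rightarrow> nat \<Rightarrow> real" where
  "F s a 0 = 0"
| "F s a (Suc j) = (if s!j then (F s a j + 1)/a else (F s a j - 1)/a)"

definition Cn :: "bool list \<Rightarrow> real \<Rightarrow> nat \<Rightarrow> bool" where
  "Cn s a j \<longleftrightarrow> (if s!j then F s a j \<le> cI a else 1 \<le> F s a j)"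

definition pre :: "bool list \<Rightarrow> real \<Rightarrow> nat \<Rightarrow> bool" where
  "pre s a j \<longleftrightarrow> (\<forall>i<j. Cn s a i)"

definition A :: "bool list \<Rightarrow> real set" where
  "A s = {a \<in> D. pre s a (length s)}"

lemma cI_ge0: "a \<in> D \<Longrightarrow> 0 \<le> cI a"
  by (auto simp: cI_def)

lemma cI_le1: "a \<in> D \<Longrightarrow> cI a \<le> 1"
  by (auto simp: cI_def field_simps)

lemma cI_lt1: "a \<in> D \<Longrightarrow> a < 2/3 \<Longrightarrow> cI a < 1"
  by (auto simp: cI_def field_simps)

lemma cI_23: "cI (2/3) = 1"
  by (simp add: cI_def)

lemma cI_mono: "a \<in> D \<Longrightarrow> b \<in> D \<Longrightarrow> a \<le> b \<Longrightarrow> cI a \<le> cI b"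
  unfolding cI_def by (auto simp: field_simps)

lemma orb_0[simp]: "orb a 0 = 0" by (simp add: orb_def)
lemma orb_Suc: "orb a (Suc j) = T a (orb a j)" by (simp add: orb_def)
lemma orb_add: "orb a (m + n) = (T a ^^ m) (orb a n)"
  by (simp add: orb_def funpow_add)

lemma F_nonneg: "a \<in> D \<Longrightarrow> pre s a j \<Longrightarrow> 0 \<le> F s a j"
proof (induction j)
  case 0 then show ?case by simp
next
  case (Suc j)
  then have p: "pre s a j" and c: "Cn s a j" by (auto simp: pre_def)
  have "0 \<le> F s a j" using Suc p by auto
  then show ?case using c Suc.prems(1) by (auto simp: Cn_def split: if_splits)
qed

lemma F_mono:
  assumes "a \<in> D" "b \<in> D" "a \<le> b" "pre s a j" "pre s b j"
  shows "F s b j \<le> F s a j \<and> (a < b \<and> 0 < j \<longrightarrow> F s b j < F s a j)"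
  using assms
proof (induction j)
  case 0 then show ?case by simp
next
  case (Suc j)
  have pa: "pre s a j" and pb: "pre s b j" and ca: "Cn s a j" and cb: "Cn s b j"
    using Suc.prems by (auto simp: pre_def)
  have IH: "F s b j \<le> F s a j" "a < b \<and> 0 < j \<longrightarrow> F s b j < F s a j" using Suc.IH[OF Suc.prems(1-3) pa pb] by auto
  have nb: "0 \<le> F s b j" using F_nonneg[OF Suc.prems(2) pb] .
  have a0: "0 < a" "0 < b" using Suc.prems by auto
  show ?case
  proof (cases "s!j")
    case True
    have 1: "(F s b j + 1)/b \<le> (F s b j + 1)/a" using a0 nb Suc.prems(3)
      by (intro divide_left_mono) auto
    have s1: "a < b \<Longrightarrow> (F s b j + 1)/b < (F s b j + 1)/a" using a0 nb
      by (intro divide_strict_left_mono) auto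
    have 2: "(F s b j + 1)/a \<le> (F s a j + 1)/a" using a0 IH by (intro divide_right_mono) auto
    show ?thesis using True 1 s1 2 by auto
  next
    case False
    then have fb: "1 \<le> F s b j" using cb by (simp add: Cn_def)
    have j0: "0 < j" using False fb by (cases j) auto
    have 1: "(F s b j - 1)/b \<le> (F s b j - 1)/a" using a0 fb Suc.prems(3)
      by (intro divide_left_mono) auto
    have 2: "(F s b j - 1)/a \<le> (F s a j - 1)/a" using a0 IH by (intro divide_right_mono) auto
    have s2: "a < b \<Longrightarrow> (F s b j - 1)/a < (F s a j - 1)/a" using a0 IH j0 by (intro divide_strict_right_mono) auto
    show ?thesis using False 1 2 s2 by auto
  qed
qed

lemma pre_convex:
  assumes "a \<in> D" "b \<in> D" "c \<in> D" "a \<le> b" "b \<le> c" "pre s a j" "pre s c j"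
  shows "pre s b j"
  using assms
proof (induction j)
  case 0 then show ?case by (simp add: pre_def)
next
  case (Suc j)
  have pa: "pre s a j" and pc: "pre s c j" and ca: "Cn s a j" and cc: "Cn s c j"
    using Suc.prems by (auto simp: pre_def)
  have pb: "pre s b j" using Suc.IH[OF Suc.prems(1-5) pa pc] .
  have m1: "F s b j \<le> F s a j" using F_mono[OF Suc.prems(1,2,4) pa pb] by auto
  have m2: "F s c j \<le> F s b j" using F_mono[OF Suc.prems(2,3,5) pb pc] by auto
  have "Cn s b j"
    using ca cc m1 m2 cI_mono[OF Suc.prems(1,2,4)] by (auto simp: Cn_def split: if_splits)
  then show ?case using pb by (auto simp: pre_def less_Suc_eq)
qed


lemma orb23_form: "\<exists>n::int. orb (2/3) j = 3 * of_int n / 2^j"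
proof (induction j)
  case 0 then show ?case by (intro exI[of _ 0]) simp
next
  case (Suc j)
  then obtain n where n: "orb (2/3) j = 3 * of_int n / 2^j" by blast
  show ?case
  proof (cases "orb (2/3) j < 1")
    case True
    have "orb (2/3) (Suc j) = (orb (2/3) j + 1) * 3 / 2" using True by (simp add: orb_Suc T_def)
    also have "\<dots> = 3 * of_int (3*n + 2^j) / 2^Suc j" by (simp add: n field_simps)
    finally show ?thesis by blast
  next
    case False
    have "orb (2/3) (Suc j) = (orb (2/3) j - 1) * 3 / 2" using False by (simp add: orb_Suc T_def)
    also have "\<dots> = 3 * of_int (3*n - 2^j) / 2^Suc j" by (simp add: n field_simps)
    finally show ?thesis by blast
  qed
qed

lemma pow2_mod3: "(2::int)^j mod 3 \<noteq> 0"
proof -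
  have "(2::int)^j mod 3 \<in> {1,2}"
  proof (induction j)
    case 0 then show ?case by simp
  next
    case (Suc j)
    have "(2::int)^Suc j mod 3 = (2 * ((2::int)^j mod 3)) mod 3" by (simp add: mod_mult_right_eq)
    then show ?case using Suc by auto
  qed
  then show ?thesis by auto
qed

lemma orb23_ne1: "orb (2/3) j \<noteq> 1"
proof
  assume h: "orb (2/3) j = 1"
  obtain n :: int where n: "orb (2/3) j = 3 * of_int n / 2^j" using orb23_form by blast
  have "3 * (of_int n :: real) = 2^j" using h n by (simp add: field_simps)
  then have "of_int (3*n) = (of_int (2^j) :: real)" by simp
  then have "3*n = 2^j" by (simp only: of_int_eq_iff)
  then have "(2::int)^j mod 3 = (3*n) mod 3" by simp
  then have "(2::int)^j mod 3 = 0" by simp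
  then show False using pow2_mod3[of j] by simp
qed

lemma orb_half: "0 < j \<Longrightarrow> orb (1/2) j = 2"
proof (induction j)
  case 0 then show ?case by simp
next
  case (Suc j)
  show ?case
  proof (cases j)
    case 0 then show ?thesis by (simp add: orb_Suc T_def)
  next
    case (Suc i)
    then show ?thesis using Suc.IH by (simp add: orb_Suc T_def)
  qed
qed

lemma F_orb:
  assumes "a \<in> D" "pre s a j"
  shows "F s a j = orb a j"
  using assms
proof (induction j)
  case 0 then show ?case by simp
next
  case (Suc j)
  have p: "pre s a j" and c: "Cn s a j" using Suc.prems by (auto simp: pre_def)
  have e: "F s a j = orb a j" using Suc.IH[OF Suc.prems(1) p] .
  show ?case
  proof (cases "s!j")
    case True
    have "orb a j < 1"
    proof (cases "a < 2/3")
      case True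
      then show ?thesis using c e \<open>s!j\<close> cI_lt1[OF Suc.prems(1)] by (simp add: Cn_def)
    next
      case False
      then have a23: "a = 2/3" using Suc.prems(1) by auto
      have "orb a j \<le> 1" using c e \<open>s!j\<close> cI_le1[OF Suc.prems(1)] by (simp add: Cn_def)
      moreover have "orb a j \<noteq> 1" by (metis a23 orb23_ne1)
      ultimately show ?thesis by linarith
    qed
    then show ?thesis using True e by (simp add: orb_Suc T_def)
  next
    case False
    then have "1 \<le> orb a j" using c e by (simp add: Cn_def)
    then show ?thesis using False e by (simp add: orb_Suc T_def)
  qed
qed

lemma A_pattern:
  assumes "a \<in> A s" "j < length s"
  shows "s!j \<longleftrightarrow> orb a j < 1"
proof -
  have aD: "a \<in> D" and p: "pre s a (length s)" using assms by (auto simp: A_def)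
  have pj: "pre s a j" using p assms(2) by (auto simp: pre_def)
  have c: "Cn s a j" using p assms(2) by (auto simp: pre_def)
  have e: "F s a j = orb a j" using F_orb[OF aD pj] .
  show ?thesis
  proof (cases "s!j")
    case True
    have "orb a j < 1"
    proof (cases "a < 2/3")
      case True
      then show ?thesis using c e \<open>s!j\<close> cI_lt1[OF aD] by (simp add: Cn_def)
    next
      case False
      then have a23: "a = 2/3" using aD by auto
      have "orb a j \<le> 1" using c e \<open>s!j\<close> cI_le1[OF aD] by (simp add: Cn_def)
      moreover have "orb a j \<noteq> 1" by (metis a23 orb23_ne1)
      ultimately show ?thesis by linarith
    qed
    then show ?thesis using True by simp
  next
    case False
    then show ?thesis using c e by (simp add: Cn_def)
  qed
qed

lemma A_notin:
  assumes "a \<in> A s" "j < length s"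
  shows "\<not> inI a (orb a j)"
proof -
  have aD: "a \<in> D" and p: "pre s a (length s)" using assms by (auto simp: A_def)
  have pj: "pre s a j" using p assms(2) by (auto simp: pre_def)
  have c: "Cn s a j" using p assms(2) by (auto simp: pre_def)
  have e: "F s a j = orb a j" using F_orb[OF aD pj] .
  show ?thesis using c e by (auto simp: Cn_def inI_def split: if_splits)
qed

definition pat :: "real \<Rightarrow> nat \<Rightarrow> bool list" where
  "pat a k = map (\<lambda>j. orb a j < 1) [0..<k]"

lemma in_A_pat:
  assumes "a \<in> D" "\<forall>j<k. \<not> inI a (orb a j)"
  shows "a \<in> A (pat a k)"
proof -
  have e: "j \<le> k \<Longrightarrow> F (pat a k) a j = orb a j" for j
    by (induction j) (auto simp: pat_def orb_Suc T_def)
  have "Cn (pat a k) a j" if "j < k" for j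
    using e[of j] that assms(2)[rule_format, OF that] by (auto simp: Cn_def pat_def inI_def)
  then show ?thesis using assms(1) by (auto simp: A_def pre_def pat_def)
qed

lemma kappa_ge: "enat k \<le> kappa a \<longleftrightarrow> (\<forall>j<k. \<not> inI a (orb a j))"
proof (cases "\<exists>k. inI a (orb a k)")
  case True
  then have kd: "kappa a = enat (LEAST k. inI a (orb a k))" by (simp add: kappa_def)
  show ?thesis
  proof
    assume "enat k \<le> kappa a"
    then have "k \<le> (LEAST k. inI a (orb a k))" using kd by simp
    then show "\<forall>j<k. \<not> inI a (orb a j)" by (meson not_less_Least order_less_le_trans)
  next
    assume h: "\<forall>j<k. \<not> inI a (orb a j)"
    have "k \<le> (LEAST k. inI a (orb a k))"
      using h LeastI_ex[OF True] by (meson not_le)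
    then show "enat k \<le> kappa a" using kd by simp
  qed
next
  case False
  then show ?thesis by (simp add: kappa_def)
qed

lemma kappa_eq: "kappa a = enat k \<longleftrightarrow> (\<forall>j<k. \<not> inI a (orb a j)) \<and> inI a (orb a k)"
proof
  assume h: "kappa a = enat k"
  then have ex: "\<exists>k. inI a (orb a k)" by (auto simp: kappa_def split: if_splits)
  then have "(LEAST k. inI a (orb a k)) = k" using h by (simp add: kappa_def)
  then show "(\<forall>j<k. \<not> inI a (orb a j)) \<and> inI a (orb a k)"
    using LeastI_ex[OF ex] not_less_Least by metis
next
  assume h: "(\<forall>j<k. \<not> inI a (orb a j)) \<and> inI a (orb a k)"
  then have "(LEAST k. inI a (orb a k)) = k"
    by (intro Least_equality) (auto simp: not_less[symmetric])
  then show "kappa a = enat k" using h by (auto simp: kappa_def)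
qed


lemma fixpt:
  assumes "a \<in> D" "a < 2/3" "orb a j = cI a" "j < m"
  shows "orb a m = 1/(1-a)"
  using assms(4)
proof (induction m)
  case 0 then show ?case by simp
next
  case (Suc m)
  have a1: "a < 1" "1/2 \<le> a" using assms(1,2) by auto
  have M1: "1 \<le> 1/(1-a)" using a1 by (simp add: field_simps)
  show ?case
  proof (cases "j = m")
    case True
    have "orb a (Suc m) = (cI a + 1)/a" using True assms(3) cI_lt1[OF assms(1,2)] by (simp add: orb_Suc T_def)
    also have "\<dots> = 1/(1-a)" using a1 by (simp add: cI_def field_simps)
    finally show ?thesis .
  next
    case False
    then have "orb a m = 1/(1-a)" using Suc by auto
    then have "orb a (Suc m) = (1/(1-a) - 1)/a" using M1 by (simp add: orb_Suc T_def)
    also have "\<dots> = 1/(1-a)" using a1 by (simp add: field_simps)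
    finally show ?thesis .
  qed
qed

lemma period0:
  assumes "orb a i = 1"
  shows "orb a (n * Suc i) = 0"
proof (induction n)
  case 0 then show ?case by simp
next
  case (Suc n)
  have z: "orb a (Suc i) = 0" using assms by (simp add: orb_Suc T_def)
  have "orb a (Suc n * Suc i) = orb a (Suc i + n * Suc i)" by (simp add: algebra_simps)
  also have "\<dots> = (T a ^^ Suc i) 0" using Suc by (simp only: orb_add)
  also have "\<dots> = 0" using z by (simp add: orb_def)
  finally show ?case .
qed

lemma period:
  assumes "orb a i = 1"
  shows "orb a m = orb a (m mod Suc i)"
proof -
  have "m = m mod Suc i + (m div Suc i) * Suc i" by (metis mod_div_mult_eq add.commute)
  then have "orb a m = (T a ^^ (m mod Suc i)) (orb a ((m div Suc i) * Suc i))"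
    by (metis orb_add)
  also have "\<dots> = orb a (m mod Suc i)" using period0[OF assms] by (simp add: orb_def)
  finally show ?thesis .
qed

lemma no_both:
  assumes "a \<in> D" "orb a i = 1" "orb a j = cI a"
  shows False
proof (cases "a < 2/3")
  case True
  have "orb a (Suc j * Suc i) = 0" using period0[OF assms(2), of "Suc j"] by simp
  moreover have "orb a (Suc j * Suc i) = 1/(1-a)"
    using fixpt[OF assms(1) True assms(3)] by simp
  moreover have "0 < 1/(1-a)" using True by simp
  ultimately show False by simp
next
  case False
  then have a23: "a = 2/3" using assms(1) by auto
  show False using assms(3) orb23_ne1[of j] cI_23 unfolding a23 by simp
qed


abbreviation U :: "real set" where "U \<equiv> {0<..<1}"

lemma F_cont: "continuous_on U (\<lambda>a. F s a j)"
proof (induction j)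
  case 0 then show ?case by simp
next
  case (Suc j)
  have nz: "\<forall>a\<in>U. a \<noteq> 0" by auto
  show ?case
  proof (cases "s!j")
    case True
    then show ?thesis using Suc nz by (simp, intro continuous_intros) auto
  next
    case False
    then show ?thesis using Suc nz by (simp, intro continuous_intros) auto
  qed
qed

lemma cI_cont: "continuous_on U cI"
  unfolding cI_def[abs_def] by (intro continuous_intros) auto

lemma DU: "D \<subseteq> U" by auto

lemma A_closed: "closed (A s)"
proof -
  define E where "E j = (if s!j then {a \<in> D. F s a j \<le> cI a} else {a \<in> D. 1 \<le> F s a j})" for j
  have cF: "continuous_on D (\<lambda>a. F s a j)" for j using F_cont continuous_on_subset DU by blast
  have cc: "continuous_on D cI" using cI_cont continuous_on_subset DU by blast
  have "closed (E j)" for j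
    unfolding E_def using continuous_on_closed_Collect_le[OF cF cc] continuous_on_closed_Collect_le[OF continuous_on_const cF] by auto
  then have "closed (D \<inter> (\<Inter>j\<in>{..<length s}. E j))" by (intro closed_Int closed_INT) auto
  moreover have "A s = D \<inter> (\<Inter>j\<in>{..<length s}. E j)"
    by (auto simp: A_def E_def pre_def Cn_def split: if_splits)
  ultimately show ?thesis by simp
qed

lemma A_convex:
  assumes "a \<in> A s" "c \<in> A s" "a \<le> b" "b \<le> c"
  shows "b \<in> A s"
proof -
  have "b \<in> D" using assms by (auto simp: A_def)
  then show ?thesis using pre_convex[of a b c s "length s"] assms by (auto simp: A_def)
qed

definition O1 :: "bool list \<Rightarrow> real set" where
  "O1 s = {a \<in> U. \<forall>i<length s. s!i \<longrightarrow> F s a i < cI a}"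
definition O2 :: "bool list \<Rightarrow> real set" where
  "O2 s = {a \<in> U. \<forall>i<length s. \<not> s!i \<longrightarrow> 1 < F s a i}"

lemma O1_open: "open (O1 s)"
proof -
  have o: "open (U \<inter> (\<lambda>a. cI a - F s a i) -` {0<..})" for i
    by (rule continuous_open_preimage) (auto intro!: continuous_intros F_cont cI_cont)
  have "O1 s = U \<inter> (\<Inter>i\<in>{i. i<length s \<and> s!i}. U \<inter> (\<lambda>a. cI a - F s a i) -` {0<..})"
    by (auto simp: O1_def)
  moreover have "open \<dots>" using o by (intro open_Int open_INT) auto
  ultimately show ?thesis by simp
qed

lemma O2_open: "open (O2 s)"
proof -
  have o: "open (U \<inter> (\<lambda>a. F s a i) -` {1<..})" for i
    by (rule continuous_open_preimage) (auto intro!: continuous_intros F_cont)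
  have "O2 s = U \<inter> (\<Inter>i\<in>{i. i<length s \<and> \<not> s!i}. U \<inter> (\<lambda>a. F s a i) -` {1<..})"
    by (auto simp: O2_def)
  moreover have "open \<dots>" using o by (intro open_Int open_INT) auto
  ultimately show ?thesis by simp
qed

lemma ext_right:
  assumes "p \<in> A s" "a \<in> D" "p \<le> a" "a \<in> O2 s"
  shows "a \<in> A s"
proof -
  have pD: "p \<in> D" and pp: "pre s p (length s)" using assms(1) by (auto simp: A_def)
  have "j \<le> length s \<Longrightarrow> pre s a j" for j
  proof (induction j)
    case 0 then show ?case by (simp add: pre_def)
  next
    case (Suc j)
    have pa: "pre s a j" using Suc by auto
    have ppj: "pre s p j" using pp Suc.prems by (auto simp: pre_def)
    have cp: "Cn s p j" using pp Suc.prems by (auto simp: pre_def)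
    have m: "F s a j \<le> F s p j" using F_mono[OF pD assms(2,3) ppj pa] by auto
    have "Cn s a j"
    proof (cases "s!j")
      case True
      then show ?thesis using cp m cI_mono[OF pD assms(2,3)] by (auto simp: Cn_def)
    next
      case False
      then show ?thesis using assms(4) Suc.prems by (auto simp: Cn_def O2_def Suc_le_eq)
    qed
    then show ?case using pa by (auto simp: pre_def less_Suc_eq)
  qed
  then show ?thesis using assms(2) by (auto simp: A_def)
qed

lemma ext_left:
  assumes "p \<in> A s" "a \<in> D" "a \<le> p" "a \<in> O1 s"
  shows "a \<in> A s"
proof -
  have pD: "p \<in> D" and pp: "pre s p (length s)" using assms(1) by (auto simp: A_def)
  have "j \<le> length s \<Longrightarrow> pre s a j" for j
  proof (induction j)
    case 0 then show ?case by (simp add: pre_def)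
  next
    case (Suc j)
    have pa: "pre s a j" using Suc by auto
    have ppj: "pre s p j" using pp Suc.prems by (auto simp: pre_def)
    have cp: "Cn s p j" using pp Suc.prems by (auto simp: pre_def)
    have m: "F s p j \<le> F s a j" using F_mono[OF assms(2) pD assms(3) pa ppj] by auto
    have "Cn s a j"
    proof (cases "s!j")
      case True
      then show ?thesis using assms(4) Suc.prems by (auto simp: Cn_def O1_def Suc_le_eq)
    next
      case False
      then show ?thesis using cp m by (auto simp: Cn_def)
    qed
    then show ?case using pa by (auto simp: pre_def less_Suc_eq)
  qed
  then show ?thesis using assms(2) by (auto simp: A_def)
qed

lemma notO1:
  assumes "p \<in> A s" "p \<notin> O1 s"
  shows "\<exists>i<length s. orb p i = cI p"
proof -
  have pD: "p \<in> D" and pp: "pre s p (length s)" using assms(1) by (auto simp: A_def)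
  obtain i where i: "i < length s" "s!i" "\<not> F s p i < cI p" using assms(2) pD by (auto simp: O1_def)
  have "Cn s p i" using pp i by (auto simp: pre_def)
  moreover have "F s p i = orb p i" using F_orb[OF pD] pp i by (auto simp: pre_def)
  ultimately show ?thesis using i by (auto simp: Cn_def)
qed

lemma notO2:
  assumes "p \<in> A s" "p \<notin> O2 s"
  shows "\<exists>i<length s. orb p i = 1"
proof -
  have pD: "p \<in> D" and pp: "pre s p (length s)" using assms(1) by (auto simp: A_def)
  obtain i where i: "i < length s" "\<not> s!i" "\<not> 1 < F s p i" using assms(2) pD by (auto simp: O2_def)
  have "Cn s p i" using pp i by (auto simp: pre_def)
  moreover have "F s p i = orb p i" using F_orb[OF pD] pp i by (auto simp: pre_def)
  ultimately show ?thesis using i by (auto simp: Cn_def)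
qed

lemma A_bdd: "bdd_below (A s)" "bdd_above (A s)"
  unfolding A_def by (auto intro: bdd_belowI[of _ "1/2"] bdd_aboveI[of _ "2/3"])

lemma right_pt:
  assumes "p \<in> A s" "p \<in> O2 s" "p < 2/3"
  shows "\<exists>a\<in>A s. p < a"
proof -
  obtain e where e: "e > 0" "ball p e \<subseteq> O2 s" using O2_open assms(2) open_contains_ball by blast
  define a where "a = min (p + e/2) (2/3)"
  have pD: "p \<in> D" using assms(1) by (auto simp: A_def)
  have "a \<in> ball p e" using e assms(3) by (auto simp: a_def dist_real_def)
  then have "a \<in> O2 s" using e by auto
  moreover have "a \<in> D" "p \<le> a" "p < a" using pD e assms(3) by (auto simp: a_def min_def max_def)
  ultimately show ?thesis using ext_right[OF assms(1)] by blast
qed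

lemma left_pt:
  assumes "p \<in> A s" "p \<in> O1 s" "1/2 < p"
  shows "\<exists>a\<in>A s. a < p"
proof -
  obtain e where e: "e > 0" "ball p e \<subseteq> O1 s" using O1_open assms(2) open_contains_ball by blast
  define a where "a = max (p - e/2) (1/2)"
  have pD: "p \<in> D" using assms(1) by (auto simp: A_def)
  have "a \<in> ball p e" using e assms(3) by (auto simp: a_def dist_real_def)
  then have "a \<in> O1 s" using e by auto
  moreover have "a \<in> D" "a \<le> p" "a < p" using pD e assms(3) by (auto simp: a_def min_def max_def)
  ultimately show ?thesis using ext_left[OF assms(1)] by blast
qed

lemma A_eq:
  assumes "A s \<noteq> {}"
  shows "A s = {Inf (A s)..Sup (A s)}"
proof -
  have i: "Inf (A s) \<in> A s" using closed_contains_Inf[OF assms A_bdd(1) A_closed] .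
  have s: "Sup (A s) \<in> A s" using closed_contains_Sup[OF assms A_bdd(2) A_closed] .
  show ?thesis
  proof
    show "A s \<subseteq> {Inf (A s)..Sup (A s)}"
    proof
      fix x assume "x \<in> A s"
      then show "x \<in> {Inf (A s)..Sup (A s)}" using cInf_lower[OF _ A_bdd(1)] cSup_upper[OF _ A_bdd(2)] by auto
    qed
    show "{Inf (A s)..Sup (A s)} \<subseteq> A s" using A_convex[OF i s] by auto
  qed
qed

lemma A_nondeg:
  assumes "A s \<noteq> {}"
  shows "Inf (A s) < Sup (A s)"
proof -
  define p where "p = Inf (A s)"
  have pA: "p \<in> A s" unfolding p_def using closed_contains_Inf[OF assms A_bdd(1) A_closed] .
  have pD: "p \<in> D" using pA by (auto simp: A_def)
  have le: "p \<le> a" if "a \<in> A s" for a unfolding p_def using that A_bdd(1) by (rule cInf_lower)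
  show ?thesis
  proof (cases "p \<in> O2 s \<and> p < 2/3")
    case True
    then obtain a where "a \<in> A s" "p < a" using right_pt pA by blast
    then show ?thesis unfolding p_def[symmetric] using cSup_upper[OF _ A_bdd(2)] by force
  next
    case nr: False
    have nl: "\<not> (p \<in> O1 s \<and> 1/2 < p)"
    proof
      assume "p \<in> O1 s \<and> 1/2 < p"
      then obtain a where "a \<in> A s" "a < p" using left_pt pA by blast
      then show False using le by force
    qed
    show ?thesis
    proof (cases "p \<in> O2 s")
      case True
      then have p23: "p = 2/3" using nr pD by auto
      then have "p \<notin> O1 s" using nl by auto
      then obtain i where "orb p i = cI p" using notO1 pA by blast
      then show ?thesis using p23 orb23_ne1[of i] cI_23 by simp
    next
      case False
      then obtain i where i: "orb p i = 1" using notO2 pA by blast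
      show ?thesis
      proof (cases "p \<in> O1 s")
        case True
        then have p12: "p = 1/2" using nl pD by auto
        have "orb (1/2) i = 1" using i unfolding p12 .
        then show ?thesis using orb_half[of i] by (cases i) auto
      next
        case False
        then obtain j where "orb p j = cI p" using notO1 pA by blast
        then show ?thesis using no_both[OF pD i] by blast
      qed
    qed
  qed
qed


lemma pre_le: "pre s a n \<Longrightarrow> j \<le> n \<Longrightarrow> pre s a j"
  by (auto simp: pre_def)

lemma orb_F_A: "a \<in> A s \<Longrightarrow> j \<le> length s \<Longrightarrow> orb a j = F s a j"
  using F_orb pre_le by (auto simp: A_def)

lemma orb_strict:
  assumes "a \<in> A s" "b \<in> A s" "a < b" "0 < j" "j \<le> length s"
  shows "orb b j < orb a j"
proof -
  have "a \<in> D" "b \<in> D" "pre s a j" "pre s b j" using assms pre_le by (auto simp: A_def)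
  then show ?thesis using F_mono[of a b s j] assms orb_F_A by auto
qed

lemma orb_mono:
  assumes "a \<in> A s" "b \<in> A s" "a \<le> b" "j \<le> length s"
  shows "orb b j \<le> orb a j"
proof -
  have "a \<in> D" "b \<in> D" "pre s a j" "pre s b j" using assms pre_le by (auto simp: A_def)
  then show ?thesis using F_mono[of a b s j] assms orb_F_A by auto
qed

lemma A_disj:
  assumes "a \<in> A s" "a \<in> A t" "length s = length t"
  shows "s = t"
  using A_pattern[OF assms(1)] A_pattern[OF assms(2)] assms(3) by (auto intro: nth_equalityI)

definition S :: "nat \<Rightarrow> real set" where
  "S k = {a \<in> D. \<forall>j<k. \<not> inI a (orb a j)}"

lemma A_sub_S: "a \<in> A s \<Longrightarrow> a \<in> S (length s)"
  using A_notin by (auto simp: S_def A_def)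

lemma S_in_A: "a \<in> S k \<Longrightarrow> a \<in> A (pat a k) \<and> length (pat a k) = k"
  using in_A_pat by (auto simp: S_def pat_def)

lemma finT: "finite {t :: bool list. length t = k}"
  using finite_lists_length_eq[of "UNIV :: bool set" k] by simp

lemma conn:
  assumes "x \<le> y" "{x..y} \<subseteq> S k"
  shows "\<exists>s. length s = k \<and> {x..y} \<subseteq> A s"
proof (rule ccontr)
  assume nc: "\<not> ?thesis"
  define s0 where "s0 = pat x k"
  have x0: "x \<in> A s0" "length s0 = k" using S_in_A assms unfolding s0_def by auto
  define e2 where "e2 = (\<Union>t\<in>{t. length t = k} - {s0}. A t)"
  have c2: "closed e2" unfolding e2_def using finT A_closed by (intro closed_UN) auto
  have cov: "{x..y} \<subseteq> A s0 \<union> e2"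
  proof
    fix b assume b: "b \<in> {x..y}"
    then have "b \<in> A (pat b k)" "length (pat b k) = k" using S_in_A assms by auto
    then show "b \<in> A s0 \<union> e2" unfolding e2_def by (cases "pat b k = s0") auto
  qed
  have dis: "A s0 \<inter> e2 \<inter> {x..y} = {}"
    unfolding e2_def using A_disj x0(2) by auto
  have n1: "A s0 \<inter> {x..y} \<noteq> {}" using x0 assms(1) by auto
  obtain b where b: "b \<in> {x..y}" "b \<notin> A s0" using nc x0(2) by blast
  then have n2: "e2 \<inter> {x..y} \<noteq> {}" using cov by blast
  have "connected {x..y}" by simp
  then show False using connected_closed[of "{x..y}"] A_closed[of s0] c2 cov dis n1 n2 by blast
qed


lemma Sk_kappa: "{a \<in> {1/2..2/3}. enat k \<le> kappa a} = S k"
  by (auto simp: S_def kappa_ge)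


lemma partA:
  fixes k :: nat
  assumes "k \<ge> 2"
  shows
    "(\<exists>J :: (real \<times> real) set.
        finite J \<and>
        (\<forall>(l, r) \<in> J. l < r) \<and>
        {a \<in> {1/2..2/3}. enat k \<le> kappa a} = (\<Union>(l, r) \<in> J. {l..r}) \<and>
        (\<forall>(l, r) \<in> J.
           (\<forall>j \<in> {1..k}. strict_antimono_on {l..r} (\<lambda>a. orb a j) \<and>
                           continuous_on {l..r} (\<lambda>a. orb a j)) \<and>
           (\<forall>j \<in> {1..k-1}. \<forall>a \<in> {l..r}. \<forall>b \<in> {l..r}. delta a j = delta b j)))"
proof -
  define X where "X = {s. length s = k \<and> A s \<noteq> {}}"
  define J where "J = (\<lambda>s. (Inf (A s), Sup (A s))) ` X"
  have fin: "finite J" unfolding J_def X_def by (rule finite_imageI, rule finite_subset[OF _ finT[of k]]) blast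
  have lr: "\<forall>(l, r) \<in> J. l < r" unfolding J_def X_def using A_nondeg by blast
  have un: "{a \<in> {1/2..2/3}. enat k \<le> kappa a} = (\<Union>(l, r) \<in> J. {l..r})"
  proof -
    have "(\<Union>(l, r) \<in> J. {l..r}) = (\<Union>s\<in>X. A s)"
      unfolding J_def using A_eq by (auto simp: X_def)
    also have "\<dots> = S k"
    proof
      show "(\<Union>s\<in>X. A s) \<subseteq> S k" using A_sub_S by (auto simp: X_def)
      show "S k \<subseteq> (\<Union>s\<in>X. A s)"
      proof
        fix a assume "a \<in> S k"
        then show "a \<in> (\<Union>s\<in>X. A s)" using S_in_A[of a k] by (auto simp: X_def)
      qed
    qed
    finally show ?thesis by (rule trans[OF Sk_kappa sym])
  qed
  have props: "(\<forall>j \<in> {1..k}. strict_antimono_on (A s) (\<lambda>a. orb a j) \<and>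
                           continuous_on (A s) (\<lambda>a. orb a j)) \<and>
           (\<forall>j \<in> {1..k-1}. \<forall>a \<in> A s. \<forall>b \<in> A s. delta a j = delta b j)" if "s \<in> X" for s
  proof (intro conjI ballI)
    fix j assume j: "j \<in> {1..k}"
    have len: "length s = k" using that by (auto simp: X_def)
    have j0: "0 < j" "j \<le> length s" using j len by auto
    show "strict_antimono_on (A s) (\<lambda>a. orb a j)"
      unfolding monotone_on_def
    proof (intro ballI impI)
      fix x y assume "x \<in> A s" "y \<in> A s" "x < y"
      then show "orb y j < orb x j" using orb_strict j0 by blast
    qed
    have AU: "A s \<subseteq> U" unfolding A_def by auto
    have "continuous_on (A s) (\<lambda>a. F s a j)"
      using continuous_on_subset[OF F_cont AU] .
    moreover have "continuous_on (A s) (\<lambda>a. orb a j) = continuous_on (A s) (\<lambda>a. F s a j)"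
      by (rule continuous_on_cong) (use orb_F_A j0 in blast)+
    ultimately show "continuous_on (A s) (\<lambda>a. orb a j)" by simp
  next
    fix j a b assume j: "j \<in> {1..k-1}" and ab: "a \<in> A s" "b \<in> A s"
    have len: "length s = k" using that by (auto simp: X_def)
    have "j < length s" using j len by auto
    then show "delta a j = delta b j" using A_pattern[OF ab(1)] A_pattern[OF ab(2)] unfolding delta_def by blast
  qed
  have "\<forall>(l, r) \<in> J.
           (\<forall>j \<in> {1..k}. strict_antimono_on {l..r} (\<lambda>a. orb a j) \<and>
                           continuous_on {l..r} (\<lambda>a. orb a j)) \<and>
           (\<forall>j \<in> {1..k-1}. \<forall>a \<in> {l..r}. \<forall>b \<in> {l..r}. delta a j = delta b j)"
  proof
    fix p assume "p \<in> J"
    then obtain s where s: "s \<in> X" "p = (Inf (A s), Sup (A s))" unfolding J_def by auto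
    have "A s = {Inf (A s)..Sup (A s)}" using A_eq s(1) by (auto simp: X_def)
    then show "case p of (l, r) \<Rightarrow> (\<forall>j \<in> {1..k}. strict_antimono_on {l..r} (\<lambda>a. orb a j) \<and>
                           continuous_on {l..r} (\<lambda>a. orb a j)) \<and>
           (\<forall>j \<in> {1..k-1}. \<forall>a \<in> {l..r}. \<forall>b \<in> {l..r}. delta a j = delta b j)"
      using props[OF s(1)] s(2) \<open>A s = _\<close> by (simp only: prod.case)
  qed
  then show ?thesis using fin lr un by blast
qed



lemma inI_lt23: assumes "a \<in> D" "inI a x" shows "a < 2/3"
proof (rule ccontr)
  assume "\<not> a < 2/3"
  then have "a = 2/3" using assms(1) by auto
  then have "cI a = 1" using cI_23 by metis
  then show False using assms(2) by (auto simp: inI_def)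
qed

lemma A_cont_orb: "continuous_on (A s) (\<lambda>a. orb a j)" if "j \<le> length s"
proof -
  have AU: "A s \<subseteq> U" unfolding A_def by auto
  have "continuous_on (A s) (\<lambda>a. F s a j)"
    using continuous_on_subset[OF F_cont AU] .
  moreover have "continuous_on (A s) (\<lambda>a. orb a j) = continuous_on (A s) (\<lambda>a. F s a j)"
    by (rule continuous_on_cong) (use orb_F_A that in blast)+
  ultimately show ?thesis by simp
qed

lemma A_cont_cI: "continuous_on (A s) cI"
proof -
  have AU: "A s \<subseteq> U" unfolding A_def by auto
  show ?thesis using continuous_on_subset[OF cI_cont AU] .
qed

lemma left_end:
  assumes "A s \<noteq> {}" "length s = k" "0 < k" "Inf (A s) < 2/3"
  shows "1 \<le> orb (Inf (A s)) k"
proof -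
  define l where "l = Inf (A s)"
  have lA: "l \<in> A s" unfolding l_def using closed_contains_Inf[OF assms(1) A_bdd(1) A_closed] .
  have lD: "l \<in> D" using lA by (auto simp: A_def)
  have le: "l \<le> a" if "a \<in> A s" for a unfolding l_def using that A_bdd(1) by (rule cInf_lower)
  show ?thesis
  proof (cases "l = 1/2")
    case True
    have "orb l k = 2" using orb_half[OF assms(3)] True by metis
    then show ?thesis unfolding l_def by simp
  next
    case False
    then have l12: "1/2 < l" using lD by auto
    have "l \<notin> O1 s"
    proof
      assume "l \<in> O1 s"
      then obtain a where "a \<in> A s" "a < l" using left_pt[OF lA _ l12] by blast
      then show False using le by force
    qed
    then obtain i where i: "i < length s" "orb l i = cI l" using notO1 lA by blast
    have "orb l k = 1/(1-l)" using fixpt[OF lD _ i(2)] assms(2,4) i(1) unfolding l_def by auto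
    moreover have "1 \<le> 1/(1-l)" using lD by (auto simp: field_simps)
    ultimately show ?thesis unfolding l_def by simp
  qed
qed

lemma right_end:
  assumes "A s \<noteq> {}" "length s = k" "a \<in> A s" "orb a k < 1"
  shows "orb (Sup (A s)) k \<le> cI (Sup (A s))"
proof -
  define r where "r = Sup (A s)"
  have rA: "r \<in> A s" unfolding r_def using closed_contains_Sup[OF assms(1) A_bdd(2) A_closed] .
  have rD: "r \<in> D" using rA by (auto simp: A_def)
  have le: "a \<le> r" if "a \<in> A s" for a unfolding r_def using that A_bdd(2) by (rule cSup_upper)
  have lt1: "orb r k < 1" using orb_mono[OF assms(3) rA le[OF assms(3)], of k] assms(2,4) by simp
  show ?thesis
  proof (cases "r = 2/3")
    case True
    have "cI r = 1" using True cI_23 by metis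
    then show ?thesis using lt1 unfolding r_def by simp
  next
    case False
    then have r23: "r < 2/3" using rD by auto
    have "r \<notin> O2 s"
    proof
      assume "r \<in> O2 s"
      then obtain b where "b \<in> A s" "r < b" using right_pt[OF rA _ r23] by blast
      then show False using le by force
    qed
    then obtain i where i: "i < length s" "orb r i = 1" using notO2 rA by blast
    have e: "orb r k = orb r (k mod Suc i)" using period[OF i(2)] .
    have "k mod Suc i < length s" using i(1) assms(2) by (meson le_less_trans less_Suc_eq_le mod_less_divisor order.strict_trans1 zero_less_Suc mod_le_divisor)
    then have "\<not> inI r (orb r (k mod Suc i))" using A_notin[OF rA] by blast
    then show ?thesis using lt1 e unfolding r_def inI_def by auto
  qed
qed


lemma S_kappa_mem: "b \<in> S k \<longleftrightarrow> b \<in> D \<and> enat k \<le> kappa b"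
  by (auto simp: S_def kappa_ge)

lemma partB:
  fixes k :: nat
  assumes "k \<ge> 2"
  shows
     "(let P = {(a'', a'). 1/2 \<le> a'' \<and> a'' < a' \<and> a' \<le> 2/3 \<and>
                  (\<forall>a \<in> {a''..a'}. enat k \<le> kappa a) \<and>
                  orb a'' k = 1 \<and> orb a' k = cI a'}
      in {a \<in> {1/2..2/3}. kappa a = enat k} = (\<Union>(a'', a') \<in> P. {a''<..<a'}) \<and>
         (\<forall>p \<in> P. \<forall>q \<in> P. p \<noteq> q \<longrightarrow>
             {fst p<..<snd p} \<inter> {fst q<..<snd q} = {}))"
proof -
  define P where "P = {(a'', a'). 1/2 \<le> a'' \<and> a'' < a' \<and> a' \<le> 2/3 \<and>
                  (\<forall>a \<in> {a''..a'}. enat k \<le> kappa a) \<and>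
                  orb a'' k = 1 \<and> orb a' k = cI a'}"
  have k0: "0 < k" using assms by auto
  have subS: "{x..y} \<subseteq> S k" if "(x, y) \<in> P" for x y
  proof
    fix b assume "b \<in> {x..y}"
    then show "b \<in> S k" using that unfolding P_def S_kappa_mem by auto
  qed
  have 1: "{a \<in> {1/2..2/3}. kappa a = enat k} \<subseteq> (\<Union>(a'', a') \<in> P. {a''<..<a'})"
  proof
    fix a assume a: "a \<in> {a \<in> {1/2..2/3}. kappa a = enat k}"
    then have aD: "a \<in> D" and pref: "\<forall>j<k. \<not> inI a (orb a j)" and hin: "inI a (orb a k)"
      using kappa_eq by auto
    have a23: "a < 2/3" using inI_lt23[OF aD hin] .
    have "a \<in> S k" using aD pref by (auto simp: S_def)
    then have aA0: "a \<in> A (pat a k)" and len0: "length (pat a k) = k" using S_in_A by auto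
    define s where "s = pat a k"
    have aA: "a \<in> A s" and len: "length s = k" using aA0 len0 unfolding s_def by auto
    have ne: "A s \<noteq> {}" using aA by auto
    define l where "l = Inf (A s)"
    define r where "r = Sup (A s)"
    have Aeq: "A s = {l..r}" using A_eq[OF ne] l_def r_def by simp
    have alr: "l \<le> a" "a \<le> r" using aA Aeq by auto
    have "l < 2/3" using alr a23 by linarith
    then have hl: "1 \<le> orb l k" using left_end[OF ne len k0] unfolding l_def by blast
    have ha: "orb a k < 1" "cI a < orb a k" using hin by (auto simp: inI_def)
    have hr: "orb r k \<le> cI r" using right_end[OF ne len aA ha(1)] unfolding r_def .
    have cf: "continuous_on (A s) (\<lambda>b. orb b k)" using A_cont_orb len by simp
    have cg: "continuous_on (A s) (\<lambda>b. orb b k - cI b)" using cf A_cont_cI by (intro continuous_intros)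
    have sub1: "{l..a} \<subseteq> A s" using Aeq alr by auto
    have sub2: "{a..r} \<subseteq> A s" using Aeq alr by auto
    have "\<exists>x. l \<le> x \<and> x \<le> a \<and> orb x k = 1"
    proof (rule IVT2')
      show "orb a k \<le> 1" using ha(1) by simp
      show "1 \<le> orb l k" by (rule hl)
      show "l \<le> a" by (rule alr(1))
      show "continuous_on {l..a} (\<lambda>b. orb b k)" by (rule continuous_on_subset[OF cf sub1])
    qed
    then obtain a'' where a'': "l \<le> a''" "a'' \<le> a" "orb a'' k = 1" by blast
    have "\<exists>x. a \<le> x \<and> x \<le> r \<and> orb x k - cI x = 0"
    proof (rule IVT2')
      show "orb r k - cI r \<le> 0" using hr by simp
      show "0 \<le> orb a k - cI a" using ha(2) by simp
      show "a \<le> r" by (rule alr(2))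
      show "continuous_on {a..r} (\<lambda>b. orb b k - cI b)" by (rule continuous_on_subset[OF cg sub2])
    qed
    then obtain a' where a': "a \<le> a'" "a' \<le> r" "orb a' k - cI a' = 0" by blast
    have lt1: "a'' < a" using a'' ha(1) by (cases "a'' = a") auto
    have lt2: "a < a'" using a' ha(2) by (cases "a' = a") auto
    have inP: "(a'', a') \<in> P"
    proof -
      have "\<forall>b \<in> {a''..a'}. enat k \<le> kappa b"
      proof
        fix b assume "b \<in> {a''..a'}"
        then have "b \<in> A s" using Aeq a'' a' by auto
        then have "b \<in> S (length s)" by (rule A_sub_S)
        then show "enat k \<le> kappa b" using len S_kappa_mem by simp
      qed
      moreover have "a'' \<in> A s" "a' \<in> A s" using Aeq a'' a' alr by auto
      then have "1/2 \<le> a''" "a' \<le> 2/3" unfolding A_def by auto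
      ultimately show ?thesis unfolding P_def using lt1 lt2 a'' a' by auto
    qed
    then show "a \<in> (\<Union>(a'', a') \<in> P. {a''<..<a'})" using lt1 lt2 by (intro UN_I[of "(a'', a')"]) auto
  qed
  have 2: "(\<Union>(a'', a') \<in> P. {a''<..<a'}) \<subseteq> {a \<in> {1/2..2/3}. kappa a = enat k}"
  proof
    fix a assume "a \<in> (\<Union>(a'', a') \<in> P. {a''<..<a'})"
    then obtain x y where xy: "(x, y) \<in> P" "x < a" "a < y" by auto
    have xyP: "orb x k = 1" "orb y k = cI y" "x < y" using xy(1) unfolding P_def by auto
    obtain s where s: "length s = k" "{x..y} \<subseteq> A s" using conn[OF _ subS[OF xy(1)]] xyP(3) by auto
    have xA: "x \<in> A s" "y \<in> A s" "a \<in> A s" using s xy xyP by auto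
    have o1: "orb a k < 1" using orb_strict[OF xA(1) xA(3) xy(2) k0] s xyP by auto
    have o2: "orb y k < orb a k" using orb_strict[OF xA(3) xA(2) xy(3) k0] s by auto
    have aD: "a \<in> D" "y \<in> D" using xA by (auto simp: A_def)
    have "cI a \<le> cI y" using cI_mono aD xy by auto
    then have "inI a (orb a k)" using o1 o2 xyP by (auto simp: inI_def)
    moreover have "\<forall>j<k. \<not> inI a (orb a j)" using A_sub_S[OF xA(3)] s by (auto simp: S_def)
    ultimately show "a \<in> {a \<in> {1/2..2/3}. kappa a = enat k}" using aD kappa_eq by auto
  qed
  have 3: "\<forall>p \<in> P. \<forall>q \<in> P. p \<noteq> q \<longrightarrow> {fst p<..<snd p} \<inter> {fst q<..<snd q} = {}"
  proof (intro ballI impI)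
    fix p q assume pq: "p \<in> P" "q \<in> P" "p \<noteq> q"
    obtain p1 p2 q1 q2 where pp: "p = (p1, p2)" and qq: "q = (q1, q2)" by fastforce
    show "{fst p<..<snd p} \<inter> {fst q<..<snd q} = {}"
    proof (rule ccontr)
      assume "{fst p<..<snd p} \<inter> {fst q<..<snd q} \<noteq> {}"
      then obtain x where "x \<in> {fst p<..<snd p} \<inter> {fst q<..<snd q}" by blast
      then have x: "p1 < x" "x < p2" "q1 < x" "x < q2" using pp qq by auto
      have Pp: "orb p1 k = 1" "orb p2 k = cI p2" using pq(1) pp unfolding P_def by auto
      have Pq: "orb q1 k = 1" "orb q2 k = cI q2" using pq(2) qq unfolding P_def by auto
      have Sp: "{p1..p2} \<subseteq> S k" using subS pq(1) pp by auto
      have Sq: "{q1..q2} \<subseteq> S k" using subS pq(2) qq by auto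
      define m where "m = min p1 q1"
      define M where "M = max p2 q2"
      have cov: "{m..M} \<subseteq> {p1..p2} \<union> {q1..q2}"
      proof
        fix b assume b: "b \<in> {m..M}"
        show "b \<in> {p1..p2} \<union> {q1..q2}"
        proof (cases "b \<le> x")
          case True then show ?thesis using b x unfolding m_def by (auto simp: min_def split: if_splits)
        next
          case False then show ?thesis using b x unfolding M_def by (auto simp: max_def split: if_splits)
        qed
      qed
      have "{m..M} \<subseteq> S k" using cov Sp Sq by blast
      moreover have "m \<le> M" using x unfolding m_def M_def by auto
      ultimately obtain s where s: "length s = k" "{m..M} \<subseteq> A s" using conn by blast
      have inA: "p1 \<in> A s" "p2 \<in> A s" "q1 \<in> A s" "q2 \<in> A s"
        using s(2) x unfolding m_def M_def by auto
      have D4: "p2 \<in> D" "q2 \<in> D" using inA by (auto simp: A_def)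
      have e1: "p1 = q1"
      proof (rule ccontr)
        assume "p1 \<noteq> q1"
        then have "p1 < q1 \<or> q1 < p1" by auto
        then show False using orb_strict[OF inA(1) inA(3) _ k0] orb_strict[OF inA(3) inA(1) _ k0] s(1) Pp Pq by auto
      qed
      have e2: "p2 = q2"
      proof (rule ccontr)
        assume "p2 \<noteq> q2"
        then have "p2 < q2 \<or> q2 < p2" by auto
        then show False
          using orb_strict[OF inA(2) inA(4) _ k0] orb_strict[OF inA(4) inA(2) _ k0] s(1) Pp Pq
            cI_mono[OF D4(1) D4(2)] cI_mono[OF D4(2) D4(1)] by force
      qed
      show False using e1 e2 pp qq pq(3) by simp
    qed
  qed
  show ?thesis unfolding Let_def P_def[symmetric] using 1 2 3 by blast
qed


theorem lemma5p1:
  fixes k :: nat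
  assumes "k \<ge> 2"
  shows
    "(\<exists>J :: (real \<times> real) set.
        finite J \<and>
        (\<forall>(l, r) \<in> J. l < r) \<and>
        {a \<in> {1/2..2/3}. enat k \<le> kappa a} = (\<Union>(l, r) \<in> J. {l..r}) \<and>
        (\<forall>(l, r) \<in> J.
           (\<forall>j \<in> {1..k}. strict_antimono_on {l..r} (\<lambda>a. orb a j) \<and>
                           continuous_on {l..r} (\<lambda>a. orb a j)) \<and>
           (\<forall>j \<in> {1..k-1}. \<forall>a \<in> {l..r}. \<forall>b \<in> {l..r}. delta a j = delta b j)))
     \<and>
     (let P = {(a'', a'). 1/2 \<le> a'' \<and> a'' < a' \<and> a' \<le> 2/3 \<and>
                  (\<forall>a \<in> {a''..a'}. enat k \<le> kappa a) \<and>
                  orb a'' k = 1 \<and> orb a' k = cI a'}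
      in {a \<in> {1/2..2/3}. kappa a = enat k} = (\<Union>(a'', a') \<in> P. {a''<..<a'}) \<and>
         (\<forall>p \<in> P. \<forall>q \<in> P. p \<noteq> q \<longrightarrow>
             {fst p<..<snd p} \<inter> {fst q<..<snd q} = {}))"
  using partA[OF assms] partB[OF assms] by (rule conjI)

end
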